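(* Let $\alpha,\beta,\gamma>0$ and let $A$ map $C[0,1]$ into functions on $[0,1]$. (a) If $A$ maps $C[0,1]$ into $C^\gamma_{per}$ and $\sup_{u\in C[0,1]}\|A(u)\|_{C^\gamma}\le\kappa'_3$, then there is $\kappa_3$ depending on $\kappa'_3$ and $\gamma$ such that $|\langle A(u)^2,e_k\rangle|\le\kappa_3/(1+(k+1)^\gamma)$ for all $u\in C[0,1]$ and $k\ge0$. (b) If for all $u,v\in C[0,1]$, $$\|A(u)-A(v)\|_2\le\kappa'_1\sup_{\varphi\in C^{\beta/\alpha}_{per},\ \|\varphi\|_{C^{\beta/\alpha}}\le1}|\langle u-v,\varphi\rangle|^\alpha,$$ then $u_n\to u$ in $C[0,1]$ implies $\|A(u_n)-A(u)\|_2\to0$, and there is $\kappa_1$ depending on $\kappa'_1,\alpha,\beta$ such that $\|A(u+he_k)-A(u)\|_2\le\kappa_1|h|^\alpha(k+1)^{-\beta}$ for all $u\in C[0,1]$, $k\ge0$, $h\in\mathbb{R}$.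
   Context: $\langle\cdot,\cdot\rangle$, $\|\cdot\|_2$: $L^2[0,1]$ inner product and norm; $e_0\equiv1$, $e_k(x)=\sqrt2\cos(k\pi x)$, $k\ge1$. For $\zeta=k+\delta$, $k\in\mathbb{Z}_+$, $\delta\in[0,1)$: $\|u\|_{C^\zeta}=\sum_{i=0}^k\|u^{(i)}\|_\infty+1_{(\delta>0)}\sup_{x\ne y\in[0,1]}|u^{(k)}(y)-u^{(k)}(x)|/|y-x|^\delta$, $C^\zeta=\{u\in C^k[0,1]:\|u\|_{C^\zeta}<\infty\}$, and $C^\zeta_{per}$ is the set of $f\in C^\zeta[0,1]$ whose even 2-periodic extension to $\mathbb{R}$ (i.e. $\overline f(-x)=f(x)$ on $(0,1]$, $\overline f(x+2)=\overline f(x)$) lies in $C^\zeta(\mathbb{R})$. *)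

theory Defs
  imports "HOL-Analysis.Analysis"
begin

text \<open>Functions on [0,1] are represented as total functions real => real;
only their values on [0,1] (resp. on the relevant set S) matter.\<close>

definition l2_inner :: "(real \<Rightarrow> real) \<Rightarrow> (real \<Rightarrow> real) \<Rightarrow> real" where
  "l2_inner f g = integral {0..1} (\<lambda>x. f x * g x)"

definition l2_norm :: "(real \<Rightarrow> real) \<Rightarrow> real" where
  "l2_norm f = sqrt (integral {0..1} (\<lambda>x. (f x)^2))"

definition ebasis :: "nat \<Rightarrow> real \<Rightarrow> real" where
  "ebasis k x = (if k = 0 then 1 else sqrt 2 * cos (real k * pi * x))"

fun hder :: "real set \<Rightarrow> nat \<Rightarrow> (real \<Rightarrow> real) \<Rightarrow> real \<Rightarrow> real" where
  "hder S 0 u = u"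
| "hder S (Suc i) u = (\<lambda>x. vector_derivative (hder S i u) (at x within S))"

definition Ck_on :: "real set \<Rightarrow> nat \<Rightarrow> (real \<Rightarrow> real) \<Rightarrow> bool" where
  "Ck_on S k u \<longleftrightarrow> (\<forall>i\<le>k. continuous_on S (hder S i u)) \<and>
     (\<forall>i<k. \<forall>x\<in>S. hder S i u differentiable (at x within S))"

definition sup_norm_on :: "real set \<Rightarrow> (real \<Rightarrow> real) \<Rightarrow> ereal" where
  "sup_norm_on S f = (SUP x\<in>S. ereal \<bar>f x\<bar>)"

definition holder_semi :: "real set \<Rightarrow> real \<Rightarrow> (real \<Rightarrow> real) \<Rightarrow> ereal" where
  "holder_semi S d g =
     (SUP p\<in>{(x, y). x \<in> S \<and> y \<in> S \<and> x \<noteq> y}.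
        ereal (\<bar>g (snd p) - g (fst p)\<bar> / \<bar>snd p - fst p\<bar> powr d))"

text \<open>C^zeta norm on S, zeta = k + delta with k = floor zeta, delta = frac zeta (value in ereal,
  so that finiteness is meaningful).\<close>
definition holder_norm_on :: "real set \<Rightarrow> real \<Rightarrow> (real \<Rightarrow> real) \<Rightarrow> ereal" where
  "holder_norm_on S \<zeta> u =
     (\<Sum>i\<le>nat \<lfloor>\<zeta>\<rfloor>. sup_norm_on S (hder S i u)) +
     (if frac \<zeta> > 0 then holder_semi S (frac \<zeta>) (hder S (nat \<lfloor>\<zeta>\<rfloor>) u) else 0)"

definition Holder_on :: "real set \<Rightarrow> real \<Rightarrow> (real \<Rightarrow> real) set" where
  "Holder_on S \<zeta> = {u. Ck_on S (nat \<lfloor>\<zeta>\<rfloor>) u \<and> holder_norm_on S \<zeta> u < \<infinity>}"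

definition holder_norm :: "real \<Rightarrow> (real \<Rightarrow> real) \<Rightarrow> ereal" where
  "holder_norm \<zeta> u = holder_norm_on {0..1} \<zeta> u"

text \<open>Even 2-periodic extension of a function on [0,1].\<close>
definition even_per_ext :: "(real \<Rightarrow> real) \<Rightarrow> real \<Rightarrow> real" where
  "even_per_ext f x = f \<bar>x - 2 * real_of_int \<lfloor>(x + 1) / 2\<rfloor>\<bar>"

definition Cper :: "real \<Rightarrow> (real \<Rightarrow> real) set" where
  "Cper \<zeta> = {f \<in> Holder_on {0..1} \<zeta>. even_per_ext f \<in> Holder_on UNIV \<zeta>}"

end

theory Submission
  imports Defs
begin


lemma comb_step:
  fixes a b :: "nat \<Rightarrow> real"
  shows "(\<Sum>i\<le>j. real (j choose i) * (a (Suc i) * b (j - i) + a i * b (Suc j - i)))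
       = (\<Sum>i\<le>Suc j. real (Suc j choose i) * (a i * b (Suc j - i)))"
proof -
  have A: "(\<Sum>i\<le>Suc j. real (Suc j choose i) * (a i * b (Suc j - i)))
     = a 0 * b (Suc j) + (\<Sum>i\<le>j. real (Suc j choose Suc i) * (a (Suc i) * b (j - i)))"
    by (subst sum.atMost_Suc_shift) simp
  have B: "(\<Sum>i\<le>j. real (Suc j choose Suc i) * (a (Suc i) * b (j - i)))
     = (\<Sum>i\<le>j. real (j choose i) * (a (Suc i) * b (j - i)))
       + (\<Sum>i\<le>j. real (j choose Suc i) * (a (Suc i) * b (j - i)))"
    by (simp add: sum.distrib[symmetric] algebra_simps)
  have C: "(\<Sum>i\<le>j. real (j choose i) * (a i * b (Suc j - i)))
     = a 0 * b (Suc j) + (\<Sum>i<j. real (j choose Suc i) * (a (Suc i) * b (Suc j - Suc i)))"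
    by (simp only: sum.atMost_shift) simp
  have D: "(\<Sum>i\<le>j. real (j choose Suc i) * (a (Suc i) * b (j - i)))
      = (\<Sum>i<j. real (j choose Suc i) * (a (Suc i) * b (Suc j - Suc i)))"
    by (simp add: lessThan_Suc_atMost[symmetric])
  show ?thesis
    using A B C D by (simp add: sum.distrib algebra_simps)
qed

lemma hder_cong:
  assumes "\<And>y. y \<in> S \<Longrightarrow> f y = g y" "x \<in> S"
  shows "hder S j f x = hder S j g x"
  using assms(2)
proof (induction j arbitrary: x)
  case 0 then show ?case using assms(1) by simp
next
  case (Suc j)
  have "\<And>D. (hder S j f has_vector_derivative D) (at x within S)
          = (hder S j g has_vector_derivative D) (at x within S)"
    using has_vector_derivative_transform_within[where d=1, OF _ _ Suc.prems] Suc.IH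
    by (metis zero_less_one)
  then show ?case by (simp add: vector_derivative_def)
qed

lemma Ck_der:
  assumes "Ck_on S m u" "i < m" "x \<in> S"
  shows "(hder S i u has_vector_derivative hder S (Suc i) u x) (at x within S)"
  using assms unfolding Ck_on_def by (simp add: vector_derivative_works[symmetric])

definition leib :: "(nat \<Rightarrow> real \<Rightarrow> real) \<Rightarrow> (nat \<Rightarrow> real \<Rightarrow> real) \<Rightarrow> nat \<Rightarrow> real \<Rightarrow> real" where
  "leib U V j y = (\<Sum>i\<le>j. real (j choose i) * (U i y * V (j - i) y))"

lemma leib_der:
  assumes dU: "\<And>i x. i < m \<Longrightarrow> x \<in> S \<Longrightarrow> (U i has_vector_derivative U (Suc i) x) (at x within S)"
    and dV: "\<And>i x. i < m \<Longrightarrow> x \<in> S \<Longrightarrow> (V i has_vector_derivative V (Suc i) x) (at x within S)"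
    and "j < m" "x \<in> S"
  shows "(leib U V j has_vector_derivative leib U V (Suc j) x) (at x within S)"
proof -
  have "((\<lambda>y. \<Sum>i\<le>j. real (j choose i) * (U i y * V (j - i) y)) has_vector_derivative
      (\<Sum>i\<le>j. real (j choose i) * (U (Suc i) x * V (j - i) x + U i x * V (Suc j - i) x))) (at x within S)"
    unfolding has_real_derivative_iff_has_vector_derivative[symmetric]
  proof (intro DERIV_sum DERIV_cmult)
    fix i assume i: "i \<in> {..j}"
    have 1: "(U i has_real_derivative U (Suc i) x) (at x within S)"
      using dU[of i x] i assms(3,4) by (simp add: has_real_derivative_iff_has_vector_derivative)
    have 2: "(V (j-i) has_real_derivative V (Suc (j - i)) x) (at x within S)"
      using dV[of "j-i" x] i assms(3,4) by (simp add: has_real_derivative_iff_has_vector_derivative)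
    have 3: "Suc (j - i) = Suc j - i" using i by auto
    show "((\<lambda>y. U i y * V (j - i) y) has_real_derivative
            U (Suc i) x * V (j - i) x + U i x * V (Suc j - i) x) (at x within S)"
      using DERIV_mult[OF 1 2] 3 by (simp add: algebra_simps)
  qed
  then show ?thesis unfolding leib_def comb_step[where a="\<lambda>i. U i x" and b="\<lambda>i. V i x" and j=j] .
qed

lemma leibniz:
  assumes dU: "\<And>i x. i < m \<Longrightarrow> x \<in> {0..1} \<Longrightarrow> (hder {0..1} i u has_vector_derivative hder {0..1} (Suc i) u x) (at x within {0..1})"
    and dV: "\<And>i x. i < m \<Longrightarrow> x \<in> {0..1} \<Longrightarrow> (hder {0..1} i v has_vector_derivative hder {0..1} (Suc i) v x) (at x within {0..1})"
    and "j \<le> m" "x \<in> {0..1::real}"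
  shows "hder {0..1} j (\<lambda>y. u y * v y) x = leib (\<lambda>i. hder {0..1} i u) (\<lambda>i. hder {0..1} i v) j x"
  using assms(3,4)
proof (induction j arbitrary: x)
  case 0 then show ?case by (simp add: leib_def)
next
  case (Suc j)
  let ?L = "leib (\<lambda>i. hder {0..1} i u) (\<lambda>i. hder {0..1} i v)"
  have "(?L j has_vector_derivative ?L (Suc j) x) (at x within {0..1})"
    by (rule leib_der[where m=m]) (use dU dV Suc.prems in auto)
  then have "(hder {0..1} j (\<lambda>y. u y * v y) has_vector_derivative ?L (Suc j) x) (at x within {0..1})"
    by (rule has_vector_derivative_transform_within[where d=1]) (use Suc in auto)
  then show ?case
    using vector_derivative_within_closed_interval[of 0 1 x] Suc.prems by auto
qed

lemma leibniz_der:
  assumes dU: "\<And>i x. i < m \<Longrightarrow> x \<in> {0..1} \<Longrightarrow> (hder {0..1} i u has_vector_derivative hder {0..1} (Suc i) u x) (at x within {0..1})"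
    and dV: "\<And>i x. i < m \<Longrightarrow> x \<in> {0..1} \<Longrightarrow> (hder {0..1} i v has_vector_derivative hder {0..1} (Suc i) v x) (at x within {0..1})"
    and "j < m" "x \<in> {0..1::real}"
  shows "(hder {0..1} j (\<lambda>y. u y * v y) has_vector_derivative hder {0..1} (Suc j) (\<lambda>y. u y * v y) x) (at x within {0..1})"
proof -
  let ?L = "leib (\<lambda>i. hder {0..1} i u) (\<lambda>i. hder {0..1} i v)"
  have "(?L j has_vector_derivative ?L (Suc j) x) (at x within {0..1})"
    by (rule leib_der[where m=m]) (use dU dV assms in auto)
  then have "(hder {0..1} j (\<lambda>y. u y * v y) has_vector_derivative ?L (Suc j) x) (at x within {0..1})"
    by (rule has_vector_derivative_transform_within[where d=1]) (use assms leibniz[OF dU dV] in auto)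
  then show ?thesis using leibniz[OF dU dV, where j="Suc j" and x=x] assms by simp
qed



lemma ibp1:
  assumes d: "\<And>x. x \<in> {0..1} \<Longrightarrow> (P has_vector_derivative Q x) (at x within {0..1})"
    and cP: "continuous_on {0..1} P" and cQ: "continuous_on {0..1} Q"
  shows "real k * pi * integral {0..1} (\<lambda>x. P x * cos (real k * pi * x))
       = - integral {0..1} (\<lambda>x. Q x * sin (real k * pi * x))"
proof -
  let ?w = "real k * pi"
  have D: "((\<lambda>x. P x * sin (?w * x)) has_vector_derivative
            (Q x * sin (?w * x) + ?w * (P x * cos (?w * x)))) (at x within {0..1})"
    if "x \<in> {0..1}" for x
  proof -
    have 1: "(P has_real_derivative Q x) (at x within {0..1})"
      using d[OF that] unfolding has_real_derivative_iff_has_vector_derivative .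
    have "((\<lambda>x. P x * sin (?w * x)) has_real_derivative
            (Q x * sin (?w * x) + P x * (cos (?w * x) * ?w))) (at x within {0..1})"
      by (intro derivative_eq_intros) (auto intro: 1)
    then show ?thesis
      by (simp add: has_real_derivative_iff_has_vector_derivative algebra_simps)
  qed
  have "((\<lambda>x. Q x * sin (?w * x) + ?w * (P x * cos (?w * x))) has_integral
        (P 1 * sin (?w * 1) - P 0 * sin (?w * 0))) {0..1}"
    by (rule fundamental_theorem_of_calculus) (use D in auto)
  then have "integral {0..1} (\<lambda>x. Q x * sin (?w * x) + ?w * (P x * cos (?w * x))) = 0"
    by (simp add: sin_npi integral_unique)
  moreover have i1: "(\<lambda>x. Q x * sin (?w * x)) integrable_on {0..1}"
    by (intro integrable_continuous_real continuous_intros cQ)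
  moreover have i2: "(\<lambda>x. P x * cos (?w * x)) integrable_on {0..1}"
    by (intro integrable_continuous_real continuous_intros cP)
  moreover have "integral {0..1} (\<lambda>x. Q x * sin (?w * x) + ?w * (P x * cos (?w * x)))
     = integral {0..1} (\<lambda>x. Q x * sin (?w * x)) + ?w * integral {0..1} (\<lambda>x. P x * cos (?w * x))"
    using i1 integrable_on_cmult_left[OF i2, of ?w] by (subst integral_add) (auto simp: integral_mult)
  ultimately show ?thesis
    by simp
qed

lemma ibp2:
  assumes d: "\<And>x. x \<in> {0..1} \<Longrightarrow> (P has_vector_derivative Q x) (at x within {0..1})"
    and cP: "continuous_on {0..1} P" and cQ: "continuous_on {0..1} Q"
    and P0: "P 0 = 0" and P1: "P 1 = 0"
  shows "real k * pi * integral {0..1} (\<lambda>x. P x * sin (real k * pi * x))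
       = integral {0..1} (\<lambda>x. Q x * cos (real k * pi * x))"
proof -
  let ?w = "real k * pi"
  have D: "((\<lambda>x. P x * cos (?w * x)) has_vector_derivative
            (Q x * cos (?w * x) - ?w * (P x * sin (?w * x)))) (at x within {0..1})"
    if "x \<in> {0..1}" for x
  proof -
    have 1: "(P has_real_derivative Q x) (at x within {0..1})"
      using d[OF that] unfolding has_real_derivative_iff_has_vector_derivative .
    have "((\<lambda>x. P x * cos (?w * x)) has_real_derivative
            (Q x * cos (?w * x) + P x * (- sin (?w * x) * ?w))) (at x within {0..1})"
      by (intro derivative_eq_intros) (auto intro: 1)
    then show ?thesis
      by (simp add: has_real_derivative_iff_has_vector_derivative algebra_simps)
  qed
  have "((\<lambda>x. Q x * cos (?w * x) - ?w * (P x * sin (?w * x))) has_integral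
        (P 1 * cos (?w * 1) - P 0 * cos (?w * 0))) {0..1}"
    by (rule fundamental_theorem_of_calculus) (use D in auto)
  then have "integral {0..1} (\<lambda>x. Q x * cos (?w * x) - ?w * (P x * sin (?w * x))) = 0"
    by (simp add: P0 P1 integral_unique)
  moreover have i1: "(\<lambda>x. Q x * cos (?w * x)) integrable_on {0..1}"
    by (intro integrable_continuous_real continuous_intros cQ)
  moreover have i2: "(\<lambda>x. P x * sin (?w * x)) integrable_on {0..1}"
    by (intro integrable_continuous_real continuous_intros cP)
  moreover have "integral {0..1} (\<lambda>x. Q x * cos (?w * x) - ?w * (P x * sin (?w * x)))
     = integral {0..1} (\<lambda>x. Q x * cos (?w * x)) - ?w * integral {0..1} (\<lambda>x. P x * sin (?w * x))"
    using i1 integrable_on_cmult_left[OF i2, of ?w] by (subst integral_diff) (auto simp: integral_mult)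
  ultimately show ?thesis
    by simp
qed

definition trig :: "nat \<Rightarrow> real \<Rightarrow> real" where
  "trig j y = (if even j then cos y else sin y)"

lemma ibp_chain:
  assumes der: "\<And>j x. j < m \<Longrightarrow> x \<in> {0..1} \<Longrightarrow>
        (hder {0..1} j f has_vector_derivative hder {0..1} (Suc j) f x) (at x within {0..1})"
    and cont: "\<And>j. j \<le> m \<Longrightarrow> continuous_on {0..1} (hder {0..1} j f)"
    and odd0: "\<And>j. j < m \<Longrightarrow> odd j \<Longrightarrow> hder {0..1} j f 0 = 0 \<and> hder {0..1} j f 1 = 0"
    and "j \<le> m"
  shows "\<bar>integral {0..1} (\<lambda>x. f x * cos (real k * pi * x))\<bar> * (real k * pi) ^ j
       = \<bar>integral {0..1} (\<lambda>x. hder {0..1} j f x * trig j (real k * pi * x))\<bar>"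
  using assms(4)
proof (induction j)
  case 0 then show ?case by (simp add: trig_def)
next
  case (Suc j)
  have j: "j < m" using Suc.prems by simp
  have w: "real k * pi \<ge> 0" by simp
  show ?case
  proof (cases "even j")
    case True
    have "real k * pi * integral {0..1} (\<lambda>x. hder {0..1} j f x * cos (real k * pi * x))
       = - integral {0..1} (\<lambda>x. hder {0..1} (Suc j) f x * sin (real k * pi * x))"
      by (rule ibp1[OF der[OF j] cont cont]) (use j in auto)
    then have "\<bar>integral {0..1} (\<lambda>x. hder {0..1} (Suc j) f x * trig (Suc j) (real k * pi * x))\<bar>
       = \<bar>real k * pi * integral {0..1} (\<lambda>x. hder {0..1} j f x * trig j (real k * pi * x))\<bar>"
      using True by (simp add: trig_def del: hder.simps)
    then show ?thesis using Suc.IH j w by (simp add: abs_mult algebra_simps del: hder.simps)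
  next
    case False
    have "real k * pi * integral {0..1} (\<lambda>x. hder {0..1} j f x * sin (real k * pi * x))
       = integral {0..1} (\<lambda>x. hder {0..1} (Suc j) f x * cos (real k * pi * x))"
      by (rule ibp2[OF der[OF j] cont cont]) (use j odd0 False in auto)
    then have "\<bar>integral {0..1} (\<lambda>x. hder {0..1} (Suc j) f x * trig (Suc j) (real k * pi * x))\<bar>
       = \<bar>real k * pi * integral {0..1} (\<lambda>x. hder {0..1} j f x * trig j (real k * pi * x))\<bar>"
      using False by (simp add: trig_def del: hder.simps)
    then show ?thesis using Suc.IH j w by (simp add: abs_mult algebra_simps del: hder.simps)
  qed
qed



lemma fin_bound:
  fixes t g :: "real \<Rightarrow> real"
  assumes tper: "\<And>y. t (y + pi) = - t y" and tb: "\<And>y. \<bar>t y\<bar> \<le> 1"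
    and tc: "continuous_on UNIV t"
    and gc: "continuous_on {0..1} g" and gb: "\<And>x. x \<in> {0..1} \<Longrightarrow> \<bar>g x\<bar> \<le> M"
    and gh: "\<And>x y. x \<in> {0..1} \<Longrightarrow> y \<in> {0..1} \<Longrightarrow> \<bar>g y - g x\<bar> \<le> M * \<bar>y - x\<bar> powr \<delta>"
    and d: "0 < \<delta>" "\<delta> < 1" and k: "k \<ge> 1"
  shows "\<bar>integral {0..1} (\<lambda>x. g x * t (real k * pi * x))\<bar> \<le> 3/2 * M * (1 / real k) powr \<delta>"
proof -
  define h where "h = 1 / real k"
  define w where "w = real k * pi"
  have h0: "0 < h" and h1: "h \<le> 1" using k by (auto simp: h_def)
  have wh: "w * h = pi" using k by (simp add: w_def h_def)
  have M0: "0 \<le> M" using gb[of 0] by auto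
  let ?G = "\<lambda>x. g x * t (w * x)"
  have tcw: "continuous_on A (\<lambda>x. t (w * x))" for A
  proof -
    have "continuous_on A (\<lambda>x. w * x)" by (intro continuous_intros)
    then show ?thesis by (rule continuous_on_compose2[OF tc]) simp
  qed
  have cG: "continuous_on A ?G" if "A \<subseteq> {0..1}" for A
    by (intro continuous_intros continuous_on_subset[OF gc that] tcw)
  have iG: "?G integrable_on {0..1}" by (rule integrable_continuous_real[OF cG]) auto
  have E1: "integral {0..h} ?G + integral {h..1} ?G = integral {0..1} ?G"
    by (rule Henstock_Kurzweil_Integration.integral_combine) (use h0 h1 iG in auto)
  have E2: "integral {0..1-h} ?G + integral {1-h..1} ?G = integral {0..1} ?G"
    by (rule Henstock_Kurzweil_Integration.integral_combine) (use h0 h1 iG in auto)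
  have E3: "integral {h..1} (\<lambda>y. g (y - h) * t (w * y)) = - integral {0..1-h} ?G"
  proof -
    have "integral {h..1} (\<lambda>y. g (y - h) * t (w * y))
        = integral {h-h..1-h} (\<lambda>x. g (x + h - h) * t (w * (x + h)))"
      using integral_shift_real_ivl[of h h 1 "\<lambda>y. g (y - h) * t (w * y)"] by simp
    also have "\<dots> = integral {0..1-h} (\<lambda>x. - ?G x)"
      by (simp add: distrib_left wh tper del: integral_neg)
    finally show ?thesis by simp
  qed
  let ?H = "\<lambda>y. (g y - g (y - h)) * t (w * y)"
  have cGs: "continuous_on {h..1} (\<lambda>y. g (y - h) * t (w * y))"
  proof -
    have c1: "continuous_on {h..1} (\<lambda>y. y - h)" by (intro continuous_intros)
    have "continuous_on {h..1} (\<lambda>y. g (y - h))"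
      by (rule continuous_on_compose2[OF gc c1]) (use h0 in auto)
    then show ?thesis by (rule continuous_on_mult[OF _ tcw])
  qed
  have E4: "integral {h..1} ?H = integral {h..1} ?G - integral {h..1} (\<lambda>y. g (y - h) * t (w * y))"
  proof -
    have i1: "?G integrable_on {h..1}" by (rule integrable_continuous_real[OF cG]) (use h0 in auto)
    have i2: "(\<lambda>y. g (y - h) * t (w * y)) integrable_on {h..1}" by (rule integrable_continuous_real[OF cGs])
    show ?thesis unfolding left_diff_distrib by (rule integral_diff[OF i1 i2])
  qed
  have pt: "\<bar>?G x\<bar> \<le> M" if "x \<in> {0..1}" for x
  proof -
    have "\<bar>g x\<bar> * \<bar>t (w * x)\<bar> \<le> M * 1"
      by (rule mult_mono) (use gb[OF that] tb M0 in auto)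
    then show ?thesis by (simp add: abs_mult)
  qed
  have eq2: "2 * integral {0..1} ?G = integral {0..h} ?G + integral {1-h..1} ?G + integral {h..1} ?H"
    using E1 E2 E3 E4 by linarith
  have B1: "\<bar>integral {0..h} ?G\<bar> \<le> M * h"
    using integral_bound[of 0 h ?G M] cG[of "{0..h}"] h0 h1 pt by auto
  have B2: "\<bar>integral {1-h..1} ?G\<bar> \<le> M * h"
    using integral_bound[of "1-h" 1 ?G M] cG[of "{1-h..1}"] h0 h1 pt by auto
  have B3: "\<bar>integral {h..1} ?H\<bar> \<le> M * h powr \<delta>"
  proof -
    have cH: "continuous_on {h..1} ?H"
      using cG[of "{h..1}"] cGs h0
      by (simp add: left_diff_distrib continuous_on_diff)
    have "\<bar>?H y\<bar> \<le> M * h powr \<delta>" if "y \<in> {h..1}" for y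
    proof -
      have "\<bar>g y - g (y - h)\<bar> \<le> M * \<bar>y - (y - h)\<bar> powr \<delta>"
        by (rule gh) (use that h0 in auto)
      then have "\<bar>g y - g (y - h)\<bar> \<le> M * h powr \<delta>" using h0 by simp
      moreover have "\<bar>t (w * y)\<bar> \<le> 1" by (rule tb)
      ultimately have "\<bar>g y - g (y - h)\<bar> * \<bar>t (w * y)\<bar> \<le> M * h powr \<delta> * 1"
        by (intro mult_mono) (use M0 in auto)
      then show ?thesis by (simp add: abs_mult)
    qed
    then have "\<bar>integral {h..1} ?H\<bar> \<le> M * h powr \<delta> * (1 - h)"
      using integral_bound[of h 1 ?H "M * h powr \<delta>"] cH h1 by auto
    also have "\<dots> \<le> M * h powr \<delta>"
      using M0 h0 by (simp add: mult_left_le)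
    finally show ?thesis .
  qed
  have hh: "h \<le> h powr \<delta>"
    using powr_mono'[of \<delta> 1 h] h0 h1 d by simp
  have "M * h \<le> M * h powr \<delta>" by (rule mult_left_mono) (use hh M0 in auto)
  then have "\<bar>integral {0..1} ?G\<bar> \<le> 3/2 * M * h powr \<delta>"
    using eq2 B1 B2 B3 unfolding abs_le_iff by (intro conjI) linarith+
  then show ?thesis unfolding h_def w_def by simp
qed



lemma trig_props:
  "trig j (y + pi) = - trig j y" "\<bar>trig j y\<bar> \<le> 1" "continuous_on UNIV (trig j)"
proof -
  show "trig j (y + pi) = - trig j y" by (simp add: trig_def)
  show "\<bar>trig j y\<bar> \<le> 1" by (simp add: trig_def)
  show "continuous_on UNIV (trig j)"
    by (cases "even j") (simp_all add: trig_def continuous_on_cos continuous_on_sin continuous_on_id)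
qed

lemma decay:
  assumes der: "\<And>j x. j < m \<Longrightarrow> x \<in> {0..1} \<Longrightarrow>
        (hder {0..1} j f has_vector_derivative hder {0..1} (Suc j) f x) (at x within {0..1})"
    and cont: "\<And>j. j \<le> m \<Longrightarrow> continuous_on {0..1} (hder {0..1} j f)"
    and odd0: "\<And>j. j < m \<Longrightarrow> odd j \<Longrightarrow> hder {0..1} j f 0 = 0 \<and> hder {0..1} j f 1 = 0"
    and bnd: "\<And>x. x \<in> {0..1} \<Longrightarrow> \<bar>hder {0..1} m f x\<bar> \<le> M"
    and hol: "\<delta> > 0 \<Longrightarrow> (\<And>x y. x \<in> {0..1} \<Longrightarrow> y \<in> {0..1} \<Longrightarrow>
               \<bar>hder {0..1} m f y - hder {0..1} m f x\<bar> \<le> M * \<bar>y - x\<bar> powr \<delta>)"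
    and d: "0 \<le> \<delta>" "\<delta> < 1" and k: "k \<ge> 1"
  shows "\<bar>integral {0..1} (\<lambda>x. f x * cos (real k * pi * x))\<bar> \<le> 2 * M * real k powr (-(real m + \<delta>))"
proof -
  let ?w = "real k * pi"
  let ?T = "integral {0..1} (\<lambda>x. hder {0..1} m f x * trig m (?w * x))"
  let ?c = "integral {0..1} (\<lambda>x. f x * cos (real k * pi * x))"
  have ch: "\<bar>?c\<bar> * ?w ^ m = \<bar>?T\<bar>"
    by (rule ibp_chain[OF der cont odd0]) auto
  have M0: "0 \<le> M" using bnd[of 0] by auto
  have kpos: "real k > 0" using k by simp
  have tcw: "continuous_on {0..1} (\<lambda>x. trig m (?w * x))"
  proof -
    have "continuous_on {0..1} (\<lambda>x. ?w * x)" by (intro continuous_intros)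
    then show ?thesis by (rule continuous_on_compose2[OF trig_props(3)]) simp
  qed
  define B where "B = (if \<delta> > 0 then 3/2 * M * (1 / real k) powr \<delta> else M)"
  have TB: "\<bar>?T\<bar> \<le> B"
  proof (cases "\<delta> > 0")
    case True
    have "\<bar>?T\<bar> \<le> 3/2 * M * (1 / real k) powr \<delta>"
      by (rule fin_bound[OF trig_props(1,2,3) cont bnd hol[OF True] True d(2) k]) auto
    then show ?thesis using True by (simp add: B_def)
  next
    case False
    have pt: "\<bar>hder {0..1} m f x * trig m (?w * x)\<bar> \<le> M" if "x \<in> {0..1}" for x
    proof -
      have "\<bar>hder {0..1} m f x\<bar> * \<bar>trig m (?w * x)\<bar> \<le> M * 1"
        by (rule mult_mono) (use bnd[OF that] trig_props(2) M0 in auto)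
      then show ?thesis by (simp add: abs_mult)
    qed
    have "\<bar>?T\<bar> \<le> M * (1 - 0)"
      using integral_bound[of 0 1 "\<lambda>x. hder {0..1} m f x * trig m (?w * x)" M]
        continuous_on_mult[OF cont[of m] tcw] pt by auto
    then show ?thesis using False by (simp add: B_def)
  qed
  have B0: "0 \<le> B" using M0 by (simp add: B_def)
  have wk: "real k ^ m \<le> ?w ^ m"
    by (rule power_mono) (use kpos pi_ge_two in auto)
  have km: "real k ^ m > 0" using kpos by simp
  have "\<bar>?c\<bar> * real k ^ m \<le> \<bar>?c\<bar> * ?w ^ m" by (rule mult_left_mono[OF wk]) simp
  then have "\<bar>?c\<bar> * real k ^ m \<le> B" using ch TB by linarith
  then have c1: "\<bar>?c\<bar> \<le> B / real k ^ m" using km by (simp add: field_simps)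
  have kp: "real k powr (-(real m + \<delta>)) = 1 / (real k ^ m * real k powr \<delta>)"
  proof -
    have "real k powr (real m + \<delta>) = real k ^ m * real k powr \<delta>"
      using kpos by (simp add: powr_add powr_realpow)
    then show ?thesis unfolding powr_minus by (simp add: divide_inverse)
  qed
  have "B / real k ^ m \<le> 2 * M * real k powr (-(real m + \<delta>))"
  proof (cases "\<delta> > 0")
    case True
    have "(1 / real k) powr \<delta> = 1 / real k powr \<delta>" using kpos by (simp add: powr_divide)
    have p: "real k powr \<delta> > 0" using kpos by simp
    have "B / real k ^ m = 3/2 * M / (real k ^ m * real k powr \<delta>)"
      using True \<open>(1 / real k) powr \<delta> = 1 / real k powr \<delta>\<close> by (simp add: B_def)
    also have "\<dots> \<le> 2 * M / (real k ^ m * real k powr \<delta>)"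
      by (rule divide_right_mono) (use M0 km p in auto)
    also have "\<dots> = 2 * M * real k powr (-(real m + \<delta>))" using kp by simp
    finally show ?thesis .
  next
    case False
    then have "\<delta> = 0" using d by simp
    then show ?thesis using kp M0 kpos km by (simp add: B_def field_simps)
  qed
  then show ?thesis using c1 by linarith
qed



lemma epe0: "-1 < x \<Longrightarrow> x < 1 \<Longrightarrow> even_per_ext f x = f \<bar>x\<bar>"
proof -
  assume "-1 < x" "x < 1"
  then have "\<lfloor>(x + 1) / 2\<rfloor> = 0" by (simp add: floor_eq_iff)
  then show ?thesis by (simp add: even_per_ext_def)
qed

lemma epe1: "1 \<le> x \<Longrightarrow> x < 3 \<Longrightarrow> even_per_ext f x = f \<bar>x - 2\<bar>"
proof -
  assume "1 \<le> x" "x < 3"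
  then have "\<lfloor>(x + 1) / 2\<rfloor> = 1" by (simp add: floor_eq_iff)
  then show ?thesis by (simp add: even_per_ext_def)
qed

lemma epe_on01: "x \<in> {0..1} \<Longrightarrow> even_per_ext f x = f x"
  by (cases "x < 1") (auto simp: epe0 epe1)

lemma epe_refl0: "x \<in> {-1<..<1} \<Longrightarrow> 0 - x \<in> {-1<..<1} \<and> even_per_ext f (0 - x) = even_per_ext f x"
  by (auto simp: epe0)

lemma epe_refl1: "x \<in> {0<..<2} \<Longrightarrow> 2 - x \<in> {0<..<2} \<and> even_per_ext f (2 - x) = even_per_ext f x"
proof -
  assume x: "x \<in> {0<..<2}"
  show ?thesis
  proof (cases "x < 1")
    case True
    then show ?thesis using x by (auto simp: epe0 epe1)
  next
    case False
    show ?thesis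
    proof (cases "x = 1")
      case True then show ?thesis by simp
    next
      case False
      then show ?thesis using x \<open>\<not> x < 1\<close> by (auto simp: epe0 epe1)
    qed
  qed
qed

lemma hder_reflect:
  assumes G: "Ck_on UNIV m G" and U: "open U"
    and refl: "\<And>x. x \<in> U \<Longrightarrow> a - x \<in> U \<and> G (a - x) = G x"
    and "j \<le> m" "x \<in> U"
  shows "hder UNIV j G (a - x) = (-1) ^ j * hder UNIV j G x"
  using assms(4,5)
proof (induction j arbitrary: x)
  case 0 then show ?case using refl by simp
next
  case (Suc j)
  let ?H = "hder UNIV j G" and ?H' = "hder UNIV (Suc j) G"
  have j: "j < m" using Suc.prems by simp
  have dH: "(?H has_real_derivative ?H' y) (at y)" for y
    using Ck_der[OF G j, of y] unfolding has_real_derivative_iff_has_vector_derivative by simp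
  have d1: "((\<lambda>y. ?H (a - y)) has_real_derivative ?H' (a - x) * (-1)) (at x)"
    by (rule DERIV_chain2[OF dH]) (intro derivative_eq_intros, auto)
  have d2: "((\<lambda>y. (-1) ^ j * ?H y) has_real_derivative (-1) ^ j * ?H' x) (at x)"
    by (rule DERIV_cmult[OF dH])
  have d3: "((\<lambda>y. ?H (a - y)) has_real_derivative (-1) ^ j * ?H' x) (at x)"
    by (rule has_field_derivative_transform_within_open[OF d2 U Suc.prems(2)]) (use Suc.IH j in auto)
  have "?H' (a - x) * (-1) = (-1) ^ j * ?H' x" by (rule DERIV_unique[OF d1 d3])
  then show ?case by simp
qed

lemma odd_vanish:
  assumes f: "f \<in> Cper \<zeta>" and j: "j < nat \<lfloor>\<zeta>\<rfloor>" "odd j"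
  shows "hder {0..1} j f 0 = 0 \<and> hder {0..1} j f 1 = 0"
proof -
  let ?m = "nat \<lfloor>\<zeta>\<rfloor>"
  let ?F = "even_per_ext f"
  have CF: "Ck_on UNIV ?m ?F" using f by (simp add: Cper_def Holder_on_def)
  have agree: "hder {0..1} i f x = hder UNIV i ?F x" if "i \<le> ?m" "x \<in> {0..1}" for i x
    using that
  proof (induction i arbitrary: x)
    case 0 then show ?case by (simp add: epe_on01)
  next
    case (Suc i)
    have i: "i < ?m" using Suc.prems by simp
    have "(hder UNIV i ?F has_vector_derivative hder UNIV (Suc i) ?F x) (at x within {0..1})"
      using Ck_der[OF CF i, of x] by (simp add: has_vector_derivative_at_within)
    then have "(hder {0..1} i f has_vector_derivative hder UNIV (Suc i) ?F x) (at x within {0..1})"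
      by (rule has_vector_derivative_transform_within[where d=1]) (use Suc i in auto)
    then show ?case
      using vector_derivative_within_closed_interval[of 0 1 x] Suc.prems by auto
  qed
  have sym0: "hder UNIV j ?F (0 - 0) = (-1) ^ j * hder UNIV j ?F 0"
    by (rule hder_reflect[OF CF, of "{-1<..<1}"]) (use epe_refl0 j in auto)
  have sym1: "hder UNIV j ?F (2 - 1) = (-1) ^ j * hder UNIV j ?F 1"
    by (rule hder_reflect[OF CF, of "{0<..<2}"]) (use epe_refl1 j in auto)
  have "hder UNIV j ?F 0 = 0" "hder UNIV j ?F 1 = 0" using sym0 sym1 j by simp_all
  then show ?thesis using agree[of j 0] agree[of j 1] j by simp
qed

lemma ereal_sum_ge_member:
  fixes g :: "nat \<Rightarrow> ereal"
  assumes "\<And>i. 0 \<le> g i" "i \<le> n"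
  shows "g i \<le> (\<Sum>i\<le>n. g i)"
  by (meson assms(1,2) atMost_iff finite_atMost sum_nonneg_leq_bound)

lemma sup_norm_ge: "x \<in> S \<Longrightarrow> ereal \<bar>g x\<bar> \<le> sup_norm_on S g"
  unfolding sup_norm_on_def by (rule SUP_upper)

lemma sup_norm_nonneg: "x \<in> S \<Longrightarrow> 0 \<le> sup_norm_on S g"
  using sup_norm_ge[of x S g] by (metis abs_ge_zero ereal_less_eq(5) order_trans)

lemma holder_semi_ge:
  "x \<in> S \<Longrightarrow> y \<in> S \<Longrightarrow> x \<noteq> y \<Longrightarrow>
     ereal (\<bar>g y - g x\<bar> / \<bar>y - x\<bar> powr d) \<le> holder_semi S d g"
  unfolding holder_semi_def by (rule SUP_upper2[of "(x, y)"]) auto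

lemma holder_semi_nonneg: "0 \<le> holder_semi {0..1} d g"
  using holder_semi_ge[of 0 "{0..1}" 1 g d] by (metis divide_nonneg_nonneg abs_ge_zero powr_ge_zero ereal_less_eq(5) order_trans atLeastAtMost_iff zero_le_one zero_neq_one order_refl)

lemma holder_extract:
  assumes hn: "holder_norm \<zeta> f \<le> ereal M"
  shows "\<And>i x. i \<le> nat \<lfloor>\<zeta>\<rfloor> \<Longrightarrow> x \<in> {0..1} \<Longrightarrow> \<bar>hder {0..1} i f x\<bar> \<le> M"
    and "frac \<zeta> > 0 \<Longrightarrow> x \<in> {0..1} \<Longrightarrow> y \<in> {0..1} \<Longrightarrow>
      \<bar>hder {0..1} (nat \<lfloor>\<zeta>\<rfloor>) f y - hder {0..1} (nat \<lfloor>\<zeta>\<rfloor>) f x\<bar> \<le> M * \<bar>y - x\<bar> powr frac \<zeta>"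
proof -
  let ?S = "{0..1::real}" and ?m = "nat \<lfloor>\<zeta>\<rfloor>"
  let ?sum = "\<Sum>i\<le>?m. sup_norm_on ?S (hder ?S i f)"
  let ?sem = "(if frac \<zeta> > 0 then holder_semi ?S (frac \<zeta>) (hder ?S ?m f) else 0)"
  have tot: "?sum + ?sem \<le> ereal M" using hn by (simp add: holder_norm_def holder_norm_on_def)
  have sn: "0 \<le> sup_norm_on ?S g" for g by (rule sup_norm_nonneg[of 0]) simp
  have semn: "0 \<le> ?sem" using holder_semi_nonneg by simp
  have sumn: "0 \<le> ?sum" by (rule sum_nonneg) (use sn in auto)
  have sumM: "?sum \<le> ereal M" using tot semn by (metis add_increasing2 order_trans order_refl)
  show "\<bar>hder {0..1} i f x\<bar> \<le> M" if "i \<le> ?m" "x \<in> ?S" for i x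
  proof -
    have "ereal \<bar>hder ?S i f x\<bar> \<le> sup_norm_on ?S (hder ?S i f)" by (rule sup_norm_ge[OF that(2)])
    also have "\<dots> \<le> ?sum" by (rule ereal_sum_ge_member[where g="\<lambda>i. sup_norm_on ?S (hder ?S i f)"]) (use sn that in auto)
    also have "\<dots> \<le> ereal M" by (rule sumM)
    finally show ?thesis by simp
  qed
  assume fr: "frac \<zeta> > 0" and x: "x \<in> ?S" and y: "y \<in> ?S"
  show "\<bar>hder ?S ?m f y - hder ?S ?m f x\<bar> \<le> M * \<bar>y - x\<bar> powr frac \<zeta>"
  proof (cases "x = y")
    case True
    have "0 \<le> M" using \<open>\<And>i x. i \<le> ?m \<Longrightarrow> x \<in> ?S \<Longrightarrow> \<bar>hder ?S i f x\<bar> \<le> M\<close>[of 0 0] by auto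
    then show ?thesis using True by simp
  next
    case False
    have "ereal (\<bar>hder ?S ?m f y - hder ?S ?m f x\<bar> / \<bar>y - x\<bar> powr frac \<zeta>) \<le> ?sem"
      using holder_semi_ge[OF x y False] fr by simp
    also have "\<dots> \<le> ereal M" using tot sumn by (metis add_increasing order_trans order_refl)
    finally have "\<bar>hder ?S ?m f y - hder ?S ?m f x\<bar> / \<bar>y - x\<bar> powr frac \<zeta> \<le> M" by simp
    moreover have "\<bar>y - x\<bar> powr frac \<zeta> > 0" using False by simp
    ultimately show ?thesis by (simp add: pos_divide_le_eq mult.commute)
  qed
qed



lemma integral_cmult_real: "integral S (\<lambda>x. c * f x) = c * integral S (f :: _ \<Rightarrow> real)"
  using integral_cmul[of S c f] by simp

lemma lip01:
  assumes d: "\<And>x. x \<in> {0..1} \<Longrightarrow> (u has_vector_derivative u' x) (at x within {0..1})"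
    and b: "\<And>x. x \<in> {0..1} \<Longrightarrow> \<bar>u' x\<bar> \<le> K"
    and x: "x \<in> {0..1::real}" and y: "y \<in> {0..1}"
  shows "\<bar>u y - u x\<bar> \<le> K * \<bar>y - x\<bar>"
proof -
  have "norm (u y - u x) \<le> K * norm (y - x)"
  proof (rule differentiable_bound[of "{0..1}" u "\<lambda>x h. h *\<^sub>R u' x" K y x])
    show "convex {0..1::real}" by simp
    show "(u has_derivative (\<lambda>h. h *\<^sub>R u' z)) (at z within {0..1})" if "z \<in> {0..1}" for z
      using d[OF that] by (simp add: has_vector_derivative_def)
    show "onorm (\<lambda>h. h *\<^sub>R u' z) \<le> K" if "z \<in> {0..1}" for z
    proof -
      have o1: "onorm (\<lambda>h::real. h) = 1" by (rule onorm_id)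
      show ?thesis using b[OF that] onorm_scaleR_left[OF bounded_linear_ident, of "u' z"] o1 by simp
    qed
  qed (use x y in auto)
  then show ?thesis by simp
qed

lemma le_powr_small: "0 \<le> (a::real) \<Longrightarrow> a \<le> 1 \<Longrightarrow> 0 < \<delta> \<Longrightarrow> \<delta> \<le> 1 \<Longrightarrow> a \<le> a powr \<delta>"
  using powr_mono'[of \<delta> 1 a] by (cases "a = 0") auto

lemma leib_bound:
  assumes "\<And>i. i \<le> m \<Longrightarrow> \<bar>U i x\<bar> \<le> K" "0 \<le> K"
  shows "\<bar>leib U U m x\<bar> \<le> 2 ^ m * K ^ 2"
proof -
  have "\<bar>leib U U m x\<bar> \<le> (\<Sum>i\<le>m. \<bar>real (m choose i) * (U i x * U (m - i) x)\<bar>)"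
    unfolding leib_def by (rule sum_abs)
  also have "\<dots> \<le> (\<Sum>i\<le>m. real (m choose i) * K ^ 2)"
  proof (rule sum_mono)
    fix i assume i: "i \<in> {..m}"
    have "\<bar>U i x\<bar> * \<bar>U (m - i) x\<bar> \<le> K * K"
      by (rule mult_mono) (use assms i in auto)
    then show "\<bar>real (m choose i) * (U i x * U (m - i) x)\<bar> \<le> real (m choose i) * K ^ 2"
      by (simp add: abs_mult power2_eq_square mult_left_mono)
  qed
  also have "\<dots> = 2 ^ m * K ^ 2"
    by (simp add: sum_distrib_right[symmetric] of_nat_sum[symmetric] choose_row_sum del: of_nat_sum)
  finally show ?thesis .
qed

lemma leib_holder:
  assumes "\<And>i. i \<le> m \<Longrightarrow> \<bar>U i x\<bar> \<le> K" "\<And>i. i \<le> m \<Longrightarrow> \<bar>U i y\<bar> \<le> K"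
    and "\<And>i. i \<le> m \<Longrightarrow> \<bar>U i y - U i x\<bar> \<le> K * r" "0 \<le> K" "0 \<le> r"
  shows "\<bar>leib U U m y - leib U U m x\<bar> \<le> 2 ^ (m + 1) * K ^ 2 * r"
proof -
  have "leib U U m y - leib U U m x = (\<Sum>i\<le>m. real (m choose i) * (U i y * U (m - i) y - U i x * U (m - i) x))"
    unfolding leib_def by (simp add: sum_subtractf[symmetric] algebra_simps)
  then have "\<bar>leib U U m y - leib U U m x\<bar> \<le> (\<Sum>i\<le>m. \<bar>real (m choose i) * (U i y * U (m - i) y - U i x * U (m - i) x)\<bar>)"
    by (simp add: sum_abs)
  also have "\<dots> \<le> (\<Sum>i\<le>m. real (m choose i) * (2 * K ^ 2 * r))"
  proof (rule sum_mono)
    fix i assume i: "i \<in> {..m}"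
    have e: "U i y * U (m - i) y - U i x * U (m - i) x = U i y * (U (m - i) y - U (m - i) x) + U (m - i) x * (U i y - U i x)"
      by (simp add: algebra_simps)
    have 1: "\<bar>U i y\<bar> * \<bar>U (m - i) y - U (m - i) x\<bar> \<le> K * (K * r)"
      by (rule mult_mono) (use assms i in auto)
    have 2: "\<bar>U (m - i) x\<bar> * \<bar>U i y - U i x\<bar> \<le> K * (K * r)"
      by (rule mult_mono) (use assms i in auto)
    have "\<bar>U i y * U (m - i) y - U i x * U (m - i) x\<bar>
       = \<bar>U i y * (U (m - i) y - U (m - i) x) + U (m - i) x * (U i y - U i x)\<bar>" by (simp only: e)
    also have "\<dots> \<le> \<bar>U i y * (U (m - i) y - U (m - i) x)\<bar> + \<bar>U (m - i) x * (U i y - U i x)\<bar>"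
      by (rule abs_triangle_ineq)
    also have "\<dots> = \<bar>U i y\<bar> * \<bar>U (m - i) y - U (m - i) x\<bar> + \<bar>U (m - i) x\<bar> * \<bar>U i y - U i x\<bar>"
      by (simp only: abs_mult)
    also have "\<dots> \<le> K * (K * r) + K * (K * r)" using 1 2 by linarith
    also have "\<dots> = 2 * K ^ 2 * r" by (simp add: power2_eq_square)
    finally have "\<bar>U i y * U (m - i) y - U i x * U (m - i) x\<bar> \<le> 2 * K ^ 2 * r" .
    then show "\<bar>real (m choose i) * (U i y * U (m - i) y - U i x * U (m - i) x)\<bar> \<le> real (m choose i) * (2 * K ^ 2 * r)"
      by (simp add: abs_mult mult_left_mono)
  qed
  also have "\<dots> = 2 ^ (m + 1) * K ^ 2 * r"
    by (simp add: sum_distrib_right[symmetric] of_nat_sum[symmetric] choose_row_sum del: of_nat_sum)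
  finally show ?thesis .
qed

lemma leib_odd:
  assumes "\<And>i. i < m \<Longrightarrow> odd i \<Longrightarrow> U i p = 0" "j < m" "odd j"
  shows "leib U U j p = 0"
  unfolding leib_def
proof (rule sum.neutral, rule ballI)
  fix i assume i: "i \<in> {..j}"
  show "real (j choose i) * (U i p * U (j - i) p) = 0"
  proof (cases "odd i")
    case True then show ?thesis using assms i by auto
  next
    case False
    then have "odd (j - i)" using assms(3) i by auto
    then show ?thesis using assms i by auto
  qed
qed



lemma kpow:
  assumes k: "k \<ge> 1" and g: "\<gamma> > 0"
  shows "real k powr (-\<gamma>) * (1 + (real k + 1) powr \<gamma>) \<le> 1 + 2 powr \<gamma>"
proof -
  have kp: "real k > 0" using k by simp
  have a: "(real k + 1) powr \<gamma> \<le> (2 * real k) powr \<gamma>"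
    by (rule powr_mono2) (use g k in auto)
  have b: "(2 * real k) powr \<gamma> = 2 powr \<gamma> * real k powr \<gamma>" by (rule powr_mult)
  have c: "real k powr (-\<gamma>) * real k powr \<gamma> = 1" using kp by (simp add: powr_minus)
  have d: "real k powr (-\<gamma>) \<le> 1"
    using powr_mono[of "-\<gamma>" 0 "real k"] g k by simp
  have e: "0 \<le> real k powr (-\<gamma>)" by simp
  have "real k powr (-\<gamma>) * (real k + 1) powr \<gamma> \<le> real k powr (-\<gamma>) * (2 powr \<gamma> * real k powr \<gamma>)"
    using a b e by (simp add: mult_left_mono)
  also have "\<dots> = 2 powr \<gamma>" using c by (simp add: algebra_simps)
  finally show ?thesis using d by (simp add: distrib_left)
qed

lemma kpow2:
  assumes k: "k \<ge> 1" and g: "\<zeta> > 0"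
  shows "real k powr (-\<zeta>) \<le> 2 powr \<zeta> * (real k + 1) powr (-\<zeta>)"
proof -
  have kp: "real k > 0" using k by simp
  have "(1 / real k) powr \<zeta> \<le> (2 / (real k + 1)) powr \<zeta>"
    by (rule powr_mono2) (use g k kp in \<open>auto simp: field_simps\<close>)
  then show ?thesis
    by (simp add: powr_divide powr_minus_divide)
qed

lemma sqrt2_le: "sqrt 2 \<le> 3/2"
proof -
  have "sqrt 2 \<le> sqrt ((3/2)^2)" by (rule real_sqrt_le_mono) (simp add: power2_eq_square)
  then show ?thesis by simp
qed

lemma two_pow_ge: "(1::real) \<le> 2 * 2 ^ m"
  by (induction m) auto

lemma gamma_split: "\<gamma> > 0 \<Longrightarrow> real (nat \<lfloor>\<gamma>\<rfloor>) + frac \<gamma> = \<gamma>"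
  by (simp add: frac_def)

lemma part_a:
  assumes g: "g \<in> Cper \<gamma>" and hn: "holder_norm \<gamma> g \<le> ereal K" and gp: "\<gamma> > 0"
  shows "\<bar>l2_inner (\<lambda>x. (g x)^2) (ebasis k)\<bar>
           \<le> 3 * (2 ^ (nat \<lfloor>\<gamma>\<rfloor> + 1) * K^2) * (1 + 2 powr \<gamma>) / (1 + (real k + 1) powr \<gamma>)"
proof -
  define m where "m = nat \<lfloor>\<gamma>\<rfloor>"
  define \<delta> where "\<delta> = frac \<gamma>"
  define M where "M = 2 ^ (m + 1) * K^2"
  let ?S = "{0..1::real}"
  let ?f = "\<lambda>x. g x * g x"
  let ?U = "\<lambda>i. hder ?S i g"
  have Cg: "Ck_on ?S m g" using g by (simp add: Cper_def Holder_on_def m_def)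
  have dg: "\<And>i x. i < m \<Longrightarrow> x \<in> ?S \<Longrightarrow> (hder ?S i g has_vector_derivative hder ?S (Suc i) g x) (at x within ?S)"
    using Ck_der[OF Cg] by blast
  have gb: "\<And>i x. i \<le> m \<Longrightarrow> x \<in> ?S \<Longrightarrow> \<bar>hder ?S i g x\<bar> \<le> K"
    using holder_extract(1)[OF hn] m_def by blast
  have gh: "\<And>x y. \<delta> > 0 \<Longrightarrow> x \<in> ?S \<Longrightarrow> y \<in> ?S \<Longrightarrow> \<bar>hder ?S m g y - hder ?S m g x\<bar> \<le> K * \<bar>y - x\<bar> powr \<delta>"
    using holder_extract(2)[OF hn] m_def \<delta>_def by blast
  have K0: "0 \<le> K" using gb[of 0 0] by auto
  have M0: "0 \<le> M" by (simp add: M_def)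
  have gv: "\<And>i. i < m \<Longrightarrow> odd i \<Longrightarrow> hder ?S i g 0 = 0 \<and> hder ?S i g 1 = 0"
    using odd_vanish[OF g] m_def by blast
  have lf: "\<And>j x. j \<le> m \<Longrightarrow> x \<in> ?S \<Longrightarrow> hder ?S j ?f x = leib ?U ?U j x"
    using leibniz[OF dg dg] by blast
  have df: "\<And>j x. j < m \<Longrightarrow> x \<in> ?S \<Longrightarrow> (hder ?S j ?f has_vector_derivative hder ?S (Suc j) ?f x) (at x within ?S)"
    using leibniz_der[OF dg dg] by blast
  have cg: "\<And>i. i \<le> m \<Longrightarrow> continuous_on ?S (hder ?S i g)"
    using Cg unfolding Ck_on_def by blast
  have cf: "continuous_on ?S (hder ?S j ?f)" if j: "j \<le> m" for j
  proof -
    have "continuous_on ?S (\<lambda>x. leib ?U ?U j x)" unfolding leib_def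
    proof (intro continuous_on_sum continuous_on_mult continuous_on_const)
      fix i assume "i \<in> {..j}"
      then show "continuous_on ?S (hder ?S i g)" "continuous_on ?S (hder ?S (j - i) g)"
        using cg j by auto
    qed
    then show ?thesis
      by (rule continuous_on_cong[THEN iffD1, rotated 2]) (use lf j in auto)
  qed
  have of: "hder ?S j ?f 0 = 0 \<and> hder ?S j ?f 1 = 0" if "j < m" "odd j" for j
  proof -
    have "leib ?U ?U j 0 = 0" by (rule leib_odd[where m=m]) (use gv that in auto)
    moreover have "leib ?U ?U j 1 = 0" by (rule leib_odd[where m=m]) (use gv that in auto)
    ultimately show ?thesis using lf[of j 0] lf[of j 1] that by auto
  qed
  have fb: "\<bar>hder ?S m ?f x\<bar> \<le> M" if "x \<in> ?S" for x
  proof -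
    have "\<bar>leib ?U ?U m x\<bar> \<le> 2 ^ m * K ^ 2" by (rule leib_bound) (use gb that K0 in auto)
    also have "\<dots> \<le> M" by (simp add: M_def)
    finally show ?thesis using lf[of m x] that by simp
  qed
  have fh: "\<bar>hder ?S m ?f y - hder ?S m ?f x\<bar> \<le> M * \<bar>y - x\<bar> powr \<delta>"
    if dp: "\<delta> > 0" and x: "x \<in> ?S" and y: "y \<in> ?S" for x y
  proof -
    have d1: "\<delta> \<le> 1" using frac_lt_1[of \<gamma>] \<delta>_def by simp
    have yx: "\<bar>y - x\<bar> \<le> 1" using x y by auto
    have Uh: "\<bar>?U i y - ?U i x\<bar> \<le> K * \<bar>y - x\<bar> powr \<delta>" if i: "i \<le> m" for i
    proof (cases "i = m")
      case True then show ?thesis using gh[OF dp x y] by simp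
    next
      case False
      then have i': "i < m" using i by simp
      have "\<bar>?U i y - ?U i x\<bar> \<le> K * \<bar>y - x\<bar>"
        by (rule lip01[OF dg[OF i'] gb x y]) (use i' in auto)
      also have "\<dots> \<le> K * \<bar>y - x\<bar> powr \<delta>"
        by (rule mult_left_mono[OF le_powr_small K0]) (use yx dp d1 in auto)
      finally show ?thesis .
    qed
    have "\<bar>leib ?U ?U m y - leib ?U ?U m x\<bar> \<le> 2 ^ (m + 1) * K ^ 2 * \<bar>y - x\<bar> powr \<delta>"
      by (rule leib_holder) (use gb x y Uh K0 in auto)
    then show ?thesis using lf[of m x] lf[of m y] x y by (simp add: M_def)
  qed
  have md: "real m + \<delta> = \<gamma>" using gamma_split[OF gp] m_def \<delta>_def by simp
  have dec: "\<bar>integral ?S (\<lambda>x. ?f x * cos (real k * pi * x))\<bar> \<le> 2 * M * real k powr (-\<gamma>)" if k: "k \<ge> 1"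
  proof -
    have "\<bar>integral ?S (\<lambda>x. ?f x * cos (real k * pi * x))\<bar> \<le> 2 * M * real k powr (-(real m + \<delta>))"
      by (rule decay[OF df cf of fb fh]) (use k \<delta>_def frac_lt_1 in auto)
    then show ?thesis using md by simp
  qed
  have Dpos: "1 + (real k + 1) powr \<gamma> > 0" by (simp add: add_pos_nonneg)
  have "\<bar>l2_inner (\<lambda>x. (g x)^2) (ebasis k)\<bar> * (1 + (real k + 1) powr \<gamma>) \<le> 3 * M * (1 + 2 powr \<gamma>)"
  proof (cases "k = 0")
    case True
    have "l2_inner (\<lambda>x. (g x)^2) (ebasis k) = integral ?S ?f"
      using True by (simp add: l2_inner_def ebasis_def power2_eq_square)
    moreover have "\<bar>integral ?S ?f\<bar> \<le> M * (1 - 0)"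
    proof -
      have cf0: "continuous_on ?S ?f" using cf[of 0] by simp
      have pf: "\<bar>?f x\<bar> \<le> M" if x: "x \<in> ?S" for x
      proof -
        have "\<bar>g x\<bar> * \<bar>g x\<bar> \<le> K * K" by (rule mult_mono) (use gb[of 0 x] x K0 in auto)
        also have "\<dots> = 1 * (K * K)" by simp
        also have "\<dots> \<le> (2 * 2 ^ m) * (K * K)"
          by (rule mult_right_mono) (use two_pow_ge[of m] in auto)
        also have "\<dots> = M" by (simp add: M_def power2_eq_square)
        finally show ?thesis by (simp add: abs_mult)
      qed
      show ?thesis using integral_bound[of 0 1 ?f M] cf0 pf by auto
    qed
    ultimately have a: "\<bar>l2_inner (\<lambda>x. (g x)^2) (ebasis k)\<bar> \<le> M" by simp
    have b: "(1 + (real k + 1) powr \<gamma>) = 2" using True by simp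
    have c: "2 * M \<le> 3 * M * (1 + 2 powr \<gamma>)"
    proof -
      have pg: "0 < 2 powr \<gamma>" by simp
      have "2 * M \<le> (3 * (1 + 2 powr \<gamma>)) * M" by (rule mult_right_mono) (use pg M0 in auto)
      then show ?thesis by (simp add: algebra_simps)
    qed
    show ?thesis using a c unfolding b by linarith
  next
    case False
    then have k: "k \<ge> 1" by simp
    have "integral ?S (\<lambda>x. (g x)^2 * ebasis k x) = integral ?S (\<lambda>x. sqrt 2 * (?f x * cos (real k * pi * x)))"
      by (rule integral_cong) (use False in \<open>simp add: ebasis_def power2_eq_square algebra_simps\<close>)
    then have "l2_inner (\<lambda>x. (g x)^2) (ebasis k) = sqrt 2 * integral ?S (\<lambda>x. ?f x * cos (real k * pi * x))"
      by (simp add: l2_inner_def integral_cmult_real)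
    then have "\<bar>l2_inner (\<lambda>x. (g x)^2) (ebasis k)\<bar> \<le> sqrt 2 * (2 * M * real k powr (-\<gamma>))"
      using dec[OF k] by (simp add: abs_mult mult_left_mono)
    also have "\<dots> \<le> 3/2 * (2 * M * real k powr (-\<gamma>))"
      by (rule mult_right_mono[OF sqrt2_le]) (use M0 in simp)
    also have "\<dots> = 3 * M * real k powr (-\<gamma>)" by simp
    finally have Lb: "\<bar>l2_inner (\<lambda>x. (g x)^2) (ebasis k)\<bar> \<le> 3 * M * real k powr (-\<gamma>)" .
    have "\<bar>l2_inner (\<lambda>x. (g x)^2) (ebasis k)\<bar> * (1 + (real k + 1) powr \<gamma>)
       \<le> (3 * M * real k powr (-\<gamma>)) * (1 + (real k + 1) powr \<gamma>)"
      by (rule mult_right_mono[OF Lb]) (use Dpos in simp)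
    also have "\<dots> = 3 * M * (real k powr (-\<gamma>) * (1 + (real k + 1) powr \<gamma>))" by (simp only: mult.assoc)
    also have "\<dots> \<le> 3 * M * (1 + 2 powr \<gamma>)"
      by (rule mult_left_mono[OF kpow[OF k gp]]) (use M0 in simp)
    finally show ?thesis .
  qed
  then show ?thesis using Dpos by (simp add: pos_le_divide_eq M_def m_def)
qed



lemma part_b_phi:
  assumes f: "\<phi> \<in> Cper \<zeta>" and hn: "holder_norm \<zeta> \<phi> \<le> 1" and zp: "\<zeta> > 0"
  shows "\<bar>l2_inner (ebasis k) \<phi>\<bar> \<le> 3 * 2 powr \<zeta> * (real k + 1) powr (-\<zeta>)"
proof -
  define m where "m = nat \<lfloor>\<zeta>\<rfloor>"
  define \<delta> where "\<delta> = frac \<zeta>"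
  let ?S = "{0..1::real}"
  have hn1: "holder_norm \<zeta> \<phi> \<le> ereal 1" using hn by (simp add: one_ereal_def)
  have Cf: "Ck_on ?S m \<phi>" using f by (simp add: Cper_def Holder_on_def m_def)
  have df: "\<And>i x. i < m \<Longrightarrow> x \<in> ?S \<Longrightarrow> (hder ?S i \<phi> has_vector_derivative hder ?S (Suc i) \<phi> x) (at x within ?S)"
    using Ck_der[OF Cf] by blast
  have cf: "\<And>i. i \<le> m \<Longrightarrow> continuous_on ?S (hder ?S i \<phi>)"
    using Cf unfolding Ck_on_def by blast
  have fb: "\<And>i x. i \<le> m \<Longrightarrow> x \<in> ?S \<Longrightarrow> \<bar>hder ?S i \<phi> x\<bar> \<le> 1"
    using holder_extract(1)[OF hn1] m_def by blast
  have fh: "\<And>x y. \<delta> > 0 \<Longrightarrow> x \<in> ?S \<Longrightarrow> y \<in> ?S \<Longrightarrow> \<bar>hder ?S m \<phi> y - hder ?S m \<phi> x\<bar> \<le> 1 * \<bar>y - x\<bar> powr \<delta>"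
    using holder_extract(2)[OF hn1] m_def \<delta>_def by blast
  have fv: "\<And>i. i < m \<Longrightarrow> odd i \<Longrightarrow> hder ?S i \<phi> 0 = 0 \<and> hder ?S i \<phi> 1 = 0"
    using odd_vanish[OF f] m_def by blast
  have md: "real m + \<delta> = \<zeta>" using gamma_split[OF zp] m_def \<delta>_def by simp
  have pg: "1 \<le> 2 powr \<zeta>" using zp by (intro ge_one_powr_ge_zero) auto
  show ?thesis
  proof (cases "k = 0")
    case True
    have "l2_inner (ebasis k) \<phi> = integral ?S \<phi>"
      using True by (simp add: l2_inner_def ebasis_def)
    moreover have "\<bar>integral ?S \<phi>\<bar> \<le> 1 * (1 - 0)"
      using integral_bound[of 0 1 \<phi> 1] cf[of 0] fb[of 0] by auto
    ultimately have "\<bar>l2_inner (ebasis k) \<phi>\<bar> \<le> 1" by simp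
    moreover have "(real k + 1) powr (-\<zeta>) = 1" using True by simp
    ultimately show ?thesis using pg by simp
  next
    case False
    then have k: "k \<ge> 1" by simp
    have "\<bar>integral ?S (\<lambda>x. \<phi> x * cos (real k * pi * x))\<bar> \<le> 2 * 1 * real k powr (-(real m + \<delta>))"
      by (rule decay[OF df cf fv fb fh]) (use k \<delta>_def frac_lt_1 in auto)
    then have dec: "\<bar>integral ?S (\<lambda>x. \<phi> x * cos (real k * pi * x))\<bar> \<le> 2 * real k powr (-\<zeta>)"
      using md by simp
    have "integral ?S (\<lambda>x. ebasis k x * \<phi> x) = integral ?S (\<lambda>x. sqrt 2 * (\<phi> x * cos (real k * pi * x)))"
      by (rule integral_cong) (use False in \<open>simp add: ebasis_def algebra_simps\<close>)
    then have "l2_inner (ebasis k) \<phi> = sqrt 2 * integral ?S (\<lambda>x. \<phi> x * cos (real k * pi * x))"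
      by (simp add: l2_inner_def integral_cmult_real)
    then have "\<bar>l2_inner (ebasis k) \<phi>\<bar> \<le> sqrt 2 * (2 * real k powr (-\<zeta>))"
      using dec by (simp add: abs_mult mult_left_mono)
    also have "\<dots> \<le> 3/2 * (2 * real k powr (-\<zeta>))"
      by (rule mult_right_mono[OF sqrt2_le]) simp
    also have "\<dots> = 3 * real k powr (-\<zeta>)" by simp
    also have "\<dots> \<le> 3 * (2 powr \<zeta> * (real k + 1) powr (-\<zeta>))"
      by (rule mult_left_mono[OF kpow2[OF k zp]]) simp
    finally show ?thesis by simp
  qed
qed

lemma at_within_01_nontriv: "x \<in> {0..1::real} \<Longrightarrow> at x within {0..1} \<noteq> bot"
  using trivial_limit_within[of x "{0..1::real}"] islimpt_Icc[of 0 1 x] by simp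

lemma hder_zero:
  assumes nb: "\<And>x. x \<in> S \<Longrightarrow> at x within S \<noteq> bot" and x: "x \<in> S"
  shows "hder S i (\<lambda>_. 0) x = 0 \<and> (hder S i (\<lambda>_. 0) has_vector_derivative 0) (at x within S)"
proof -
  have A: "hder S i (\<lambda>_. 0) y = 0" if "y \<in> S" for y
    using that
  proof (induction i arbitrary: y)
    case 0 then show ?case by simp
  next
    case (Suc i)
    have "((\<lambda>_. 0::real) has_vector_derivative 0) (at y within S)" by (rule has_vector_derivative_const)
    then have "(hder S i (\<lambda>_. 0) has_vector_derivative 0) (at y within S)"
      by (rule has_vector_derivative_transform_within[where d=1]) (use Suc in auto)
    then show ?case using vector_derivative_within[OF nb[OF Suc.prems]] by simp
  qed
  have "((\<lambda>_. 0::real) has_vector_derivative 0) (at x within S)" by (rule has_vector_derivative_const)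
  then have "(hder S i (\<lambda>_. 0) has_vector_derivative 0) (at x within S)"
    by (rule has_vector_derivative_transform_within[where d=1]) (use A x in auto)
  then show ?thesis using A x by simp
qed

lemma zero_holder:
  assumes nb: "\<And>x. x \<in> S \<Longrightarrow> at x within S \<noteq> bot"
  shows "Ck_on S m (\<lambda>_. 0) \<and> holder_norm_on S \<zeta> (\<lambda>_. 0) \<le> 0"
proof
  show "Ck_on S m (\<lambda>_. 0)"
    unfolding Ck_on_def
  proof (intro conjI allI impI ballI)
    fix i x assume "x \<in> S"
    then show "hder S i (\<lambda>_. 0) differentiable at x within S"
      using hder_zero[OF nb] differentiableI_vector by blast
  next
    fix i
    have "continuous_on S (\<lambda>_. 0::real)" by simp
    then show "continuous_on S (hder S i (\<lambda>_. 0))"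
      by (rule continuous_on_cong[THEN iffD1, rotated 2]) (use hder_zero[OF nb] in auto)
  qed
  have sn: "sup_norm_on S (hder S i (\<lambda>_. 0)) \<le> 0" for i
    unfolding sup_norm_on_def by (rule SUP_least) (use hder_zero[OF nb] in auto)
  have hs: "holder_semi S d (hder S i (\<lambda>_. 0)) \<le> 0" for d i
    unfolding holder_semi_def by (rule SUP_least) (use hder_zero[OF nb] in auto)
  have "(\<Sum>i\<le>nat \<lfloor>\<zeta>\<rfloor>. sup_norm_on S (hder S i (\<lambda>_. 0))) \<le> 0"
    by (rule sum_nonpos) (use sn in auto)
  moreover have "(if frac \<zeta> > 0 then holder_semi S (frac \<zeta>) (hder S (nat \<lfloor>\<zeta>\<rfloor>) (\<lambda>_. 0)) else 0) \<le> 0"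
    using hs by simp
  ultimately show "holder_norm_on S \<zeta> (\<lambda>_. 0) \<le> 0"
    unfolding holder_norm_on_def by (metis add_nonpos_nonpos)
qed

lemma zero_Cper: "(\<lambda>_. 0) \<in> Cper \<zeta> \<and> holder_norm \<zeta> (\<lambda>_. 0) \<le> 1"
proof -
  have z1: "Ck_on {0..1} (nat \<lfloor>\<zeta>\<rfloor>) (\<lambda>_. 0) \<and> holder_norm_on {0..1} \<zeta> (\<lambda>_. 0) \<le> 0"
    by (rule zero_holder) (rule at_within_01_nontriv)
  have z2: "Ck_on UNIV (nat \<lfloor>\<zeta>\<rfloor>) (\<lambda>_. 0) \<and> holder_norm_on UNIV \<zeta> (\<lambda>_. 0) \<le> 0"
    by (rule zero_holder) simp
  have e: "even_per_ext (\<lambda>_. 0) = (\<lambda>_. 0)" by (rule ext) (simp add: even_per_ext_def)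
  have "(0::ereal) < \<infinity>" by simp
  then show ?thesis using z1 z2 e
    by (auto simp: Cper_def Holder_on_def holder_norm_def intro: order.strict_trans1 order_trans)
qed

lemma small_inner:
  assumes w: "continuous_on {0..1} w" "\<And>x. x \<in> {0..1} \<Longrightarrow> \<bar>w x\<bar> \<le> e"
    and f: "\<phi> \<in> Cper \<zeta>" "holder_norm \<zeta> \<phi> \<le> 1"
  shows "\<bar>l2_inner w \<phi>\<bar> \<le> e"
proof -
  let ?S = "{0..1::real}"
  have hn1: "holder_norm \<zeta> \<phi> \<le> ereal 1" using f(2) by (simp add: one_ereal_def)
  have cf: "continuous_on ?S \<phi>"
    using f(1) unfolding Cper_def Holder_on_def Ck_on_def by auto
  have fb: "\<bar>\<phi> x\<bar> \<le> 1" if "x \<in> ?S" for x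
    using holder_extract(1)[OF hn1, of 0 x] that by simp
  have pt: "\<bar>w x * \<phi> x\<bar> \<le> e" if "x \<in> ?S" for x
  proof -
    have "\<bar>w x\<bar> * \<bar>\<phi> x\<bar> \<le> e * 1"
      by (rule mult_mono) (use w(2)[OF that] fb[OF that] in auto)
    then show ?thesis by (simp add: abs_mult)
  qed
  have "\<bar>integral ?S (\<lambda>x. w x * \<phi> x)\<bar> \<le> e * (1 - 0)"
    using integral_bound[of 0 1 "\<lambda>x. w x * \<phi> x" e] continuous_on_mult[OF w(1) cf] pt by auto
  then show ?thesis by (simp add: l2_inner_def)
qed

lemma sup_le:
  assumes B: "\<And>\<phi>. \<phi> \<in> Cper \<zeta> \<Longrightarrow> holder_norm \<zeta> \<phi> \<le> 1 \<Longrightarrow> \<bar>l2_inner w \<phi>\<bar> powr \<alpha> \<le> Bd"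
  shows "0 \<le> Sup {\<bar>l2_inner w \<phi>\<bar> powr \<alpha> | \<phi>. \<phi> \<in> Cper \<zeta> \<and> holder_norm \<zeta> \<phi> \<le> 1}
       \<and> Sup {\<bar>l2_inner w \<phi>\<bar> powr \<alpha> | \<phi>. \<phi> \<in> Cper \<zeta> \<and> holder_norm \<zeta> \<phi> \<le> 1} \<le> Bd"
proof -
  let ?X = "{\<bar>l2_inner w \<phi>\<bar> powr \<alpha> | \<phi>. \<phi> \<in> Cper \<zeta> \<and> holder_norm \<zeta> \<phi> \<le> 1}"
  have mem: "\<bar>l2_inner w (\<lambda>_. 0)\<bar> powr \<alpha> \<in> ?X" using zero_Cper by blast
  have ne: "?X \<noteq> {}" using mem by blast
  have bd: "bdd_above ?X" unfolding bdd_above_def using B by blast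
  have "0 \<le> \<bar>l2_inner w (\<lambda>_. 0)\<bar> powr \<alpha>" by simp
  also have "\<dots> \<le> Sup ?X" by (rule cSup_upper[OF mem bd])
  finally have "0 \<le> Sup ?X" .
  moreover have "Sup ?X \<le> Bd" by (rule cSup_least[OF ne]) (use B in blast)
  ultimately show ?thesis by simp
qed



lemma ebasis_cont: "continuous_on S (ebasis k)"
proof (cases "k = 0")
  case True
  then have "ebasis k = (\<lambda>_. 1)" by (simp add: ebasis_def fun_eq_iff)
  then show ?thesis by simp
next
  case False
  then have "ebasis k = (\<lambda>x. sqrt 2 * cos (real k * pi * x))" by (simp add: ebasis_def fun_eq_iff)
  then show ?thesis by (simp add: continuous_intros)
qed

lemma l2_nonneg: "0 \<le> l2_norm f"
proof -
  have "0 \<le> integral {0..1} (\<lambda>x. (f x)^2)"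
  proof (cases "(\<lambda>x. (f x)^2) integrable_on {0..1}")
    case True then show ?thesis by (rule integral_nonneg) auto
  next
    case False then show ?thesis by (simp add: not_integrable_integral)
  qed
  then show ?thesis by (simp add: l2_norm_def)
qed

lemma partA:
  assumes gp: "\<gamma> > 0"
    and H: "\<forall>u. continuous_on {0..1} u \<longrightarrow> A u \<in> Cper \<gamma> \<and> holder_norm \<gamma> (A u) \<le> ereal K"
    and cu: "continuous_on {0..1} u"
  shows "\<bar>l2_inner (\<lambda>x. (A u x)^2) (ebasis k)\<bar>
           \<le> 3 * (2 ^ (nat \<lfloor>\<gamma>\<rfloor> + 1) * K^2) * (1 + 2 powr \<gamma>) / (1 + (real k + 1) powr \<gamma>)"
proof -
  have "A u \<in> Cper \<gamma>" "holder_norm \<gamma> (A u) \<le> ereal K" using H cu by auto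
  then show ?thesis by (rule part_a[OF _ _ gp])
qed

lemma keyB:
  assumes H: "\<forall>u v. continuous_on {0..1} u \<longrightarrow> continuous_on {0..1} v \<longrightarrow>
                 l2_norm (\<lambda>x. A u x - A v x) \<le>
                   \<kappa>1' * Sup {\<bar>l2_inner (\<lambda>x. u x - v x) \<phi>\<bar> powr \<alpha> | \<phi>.
                              \<phi> \<in> Cper (\<beta> / \<alpha>) \<and> holder_norm (\<beta> / \<alpha>) \<phi> \<le> 1}"
    and cu: "continuous_on {0..1} u" and cv: "continuous_on {0..1} v"
    and B: "\<And>\<phi>. \<phi> \<in> Cper (\<beta> / \<alpha>) \<Longrightarrow> holder_norm (\<beta> / \<alpha>) \<phi> \<le> 1 \<Longrightarrow>
                     \<bar>l2_inner (\<lambda>x. u x - v x) \<phi>\<bar> powr \<alpha> \<le> Bd"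
  shows "l2_norm (\<lambda>x. A u x - A v x) \<le> \<bar>\<kappa>1'\<bar> * Bd"
proof -
  let ?X = "{\<bar>l2_inner (\<lambda>x. u x - v x) \<phi>\<bar> powr \<alpha> | \<phi>. \<phi> \<in> Cper (\<beta> / \<alpha>) \<and> holder_norm (\<beta> / \<alpha>) \<phi> \<le> 1}"
  have s: "0 \<le> Sup ?X \<and> Sup ?X \<le> Bd" by (rule sup_le) (use B in blast)
  have "l2_norm (\<lambda>x. A u x - A v x) \<le> \<kappa>1' * Sup ?X"
    using H cu cv by blast
  also have "\<dots> \<le> \<bar>\<kappa>1'\<bar> * Sup ?X" using s by (simp add: mult_right_mono)
  also have "\<dots> \<le> \<bar>\<kappa>1'\<bar> * Bd" using s by (simp add: mult_left_mono)
  finally show ?thesis .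
qed

lemma partB_cont:
  assumes ap: "\<alpha> > 0"
    and H: "\<forall>u v. continuous_on {0..1} u \<longrightarrow> continuous_on {0..1} v \<longrightarrow>
                 l2_norm (\<lambda>x. A u x - A v x) \<le>
                   \<kappa>1' * Sup {\<bar>l2_inner (\<lambda>x. u x - v x) \<phi>\<bar> powr \<alpha> | \<phi>.
                              \<phi> \<in> Cper (\<beta> / \<alpha>) \<and> holder_norm (\<beta> / \<alpha>) \<phi> \<le> 1}"
    and a: "(\<forall>n. continuous_on {0..1} (un n)) \<and> continuous_on {0..1} u \<and>
                          uniform_limit {0..1} un u sequentially"
  shows "(\<lambda>n. l2_norm (\<lambda>x. A (un n) x - A u x)) \<longlonglongrightarrow> 0"
proof (rule LIMSEQ_I)
  fix r :: real assume r: "0 < r"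
  define q where "q = r / (\<bar>\<kappa>1'\<bar> + 1)"
  have q0: "0 < q" using r by (simp add: q_def add_pos_nonneg)
  define e where "e = q powr (1 / \<alpha>)"
  have e0: "0 < e" using q0 by (simp add: e_def)
  have eq: "e powr \<alpha> = q" using q0 ap by (simp add: e_def powr_powr)
  have "\<forall>\<^sub>F n in sequentially. \<forall>x\<in>{0..1}. dist (un n x) (u x) < e"
    by (rule uniform_limitD) (use a e0 in auto)
  then obtain N where N: "\<And>n x. n \<ge> N \<Longrightarrow> x \<in> {0..1} \<Longrightarrow> dist (un n x) (u x) < e"
    unfolding eventually_sequentially by blast
  have nN: "norm (l2_norm (\<lambda>x. A (un n) x - A u x) - 0) < r" if n: "n \<ge> N" for n
  proof -
    have cw: "continuous_on {0..1} (\<lambda>x. un n x - u x)"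
      using a by (intro continuous_intros) auto
    have "l2_norm (\<lambda>x. A (un n) x - A u x) \<le> \<bar>\<kappa>1'\<bar> * e powr \<alpha>"
    proof (rule keyB[OF H])
      show "continuous_on {0..1} (un n)" "continuous_on {0..1} u" using a by auto
      fix \<phi> assume p: "\<phi> \<in> Cper (\<beta> / \<alpha>)" "holder_norm (\<beta> / \<alpha>) \<phi> \<le> 1"
      have "\<bar>l2_inner (\<lambda>x. un n x - u x) \<phi>\<bar> \<le> e"
        by (rule small_inner[OF cw _ p]) (use N[OF n] in \<open>auto simp: dist_real_def less_imp_le\<close>)
      then show "\<bar>l2_inner (\<lambda>x. un n x - u x) \<phi>\<bar> powr \<alpha> \<le> e powr \<alpha>"
        by (rule powr_mono2[rotated 2]) (use ap in auto)
    qed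
    also have "\<dots> = \<bar>\<kappa>1'\<bar> * q" using eq by simp
    also have "\<dots> < r"
    proof -
      have "\<bar>\<kappa>1'\<bar> * q = r * (\<bar>\<kappa>1'\<bar> / (\<bar>\<kappa>1'\<bar> + 1))" by (simp add: q_def)
      also have "\<dots> < r * 1"
        by (rule mult_strict_left_mono) (use r in auto)
      finally show ?thesis by simp
    qed
    finally show ?thesis using l2_nonneg[of "\<lambda>x. A (un n) x - A u x"] by simp
  qed
  show "\<exists>no. \<forall>n\<ge>no. norm (l2_norm (\<lambda>x. A (un n) x - A u x) - 0) < r"
    by (rule exI[of _ N]) (use nN in auto)
qed

lemma partB_lip:
  assumes ap: "\<alpha> > 0" and bp: "\<beta> > 0"
    and H: "\<forall>u v. continuous_on {0..1} u \<longrightarrow> continuous_on {0..1} v \<longrightarrow>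
                 l2_norm (\<lambda>x. A u x - A v x) \<le>
                   \<kappa>1' * Sup {\<bar>l2_inner (\<lambda>x. u x - v x) \<phi>\<bar> powr \<alpha> | \<phi>.
                              \<phi> \<in> Cper (\<beta> / \<alpha>) \<and> holder_norm (\<beta> / \<alpha>) \<phi> \<le> 1}"
    and cu: "continuous_on {0..1} u"
  shows "l2_norm (\<lambda>x. A (\<lambda>y. u y + h * ebasis k y) x - A u x)
           \<le> (\<bar>\<kappa>1'\<bar> * (3 * 2 powr (\<beta> / \<alpha>)) powr \<alpha>) * \<bar>h\<bar> powr \<alpha> * (real k + 1) powr (- \<beta>)"
proof -
  define \<zeta> where "\<zeta> = \<beta> / \<alpha>"
  have zp: "\<zeta> > 0" using ap bp by (simp add: \<zeta>_def)
  define C where "C = 3 * 2 powr \<zeta>"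
  let ?v = "\<lambda>y. u y + h * ebasis k y"
  have cv: "continuous_on {0..1} ?v"
    by (rule continuous_on_add[OF cu continuous_on_mult[OF continuous_on_const ebasis_cont]])
  define Bd where "Bd = \<bar>h\<bar> powr \<alpha> * C powr \<alpha> * (real k + 1) powr (- \<beta>)"
  have "l2_norm (\<lambda>x. A ?v x - A u x) \<le> \<bar>\<kappa>1'\<bar> * Bd"
  proof (rule keyB[OF H cv cu])
    fix \<phi> assume p0: "\<phi> \<in> Cper (\<beta> / \<alpha>)" "holder_norm (\<beta> / \<alpha>) \<phi> \<le> 1"
    then have p: "\<phi> \<in> Cper \<zeta>" "holder_norm \<zeta> \<phi> \<le> 1" by (simp_all add: \<zeta>_def)
    have fe: "(\<lambda>x. (?v x - u x) * \<phi> x) = (\<lambda>x. h * (ebasis k x * \<phi> x))"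
      by (rule ext) (simp add: algebra_simps)
    have li: "l2_inner (\<lambda>x. ?v x - u x) \<phi> = h * l2_inner (ebasis k) \<phi>"
      unfolding l2_inner_def fe by (rule integral_cmult_real)
    have pb: "\<bar>l2_inner (ebasis k) \<phi>\<bar> \<le> C * (real k + 1) powr (-\<zeta>)"
      using part_b_phi[OF p zp, of k] by (simp add: C_def)
    have "\<bar>l2_inner (\<lambda>x. ?v x - u x) \<phi>\<bar> \<le> \<bar>h\<bar> * (C * (real k + 1) powr (-\<zeta>))"
      unfolding li abs_mult by (rule mult_left_mono[OF pb]) simp
    then have "\<bar>l2_inner (\<lambda>x. ?v x - u x) \<phi>\<bar> powr \<alpha> \<le> (\<bar>h\<bar> * (C * (real k + 1) powr (-\<zeta>))) powr \<alpha>"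
      by (rule powr_mono2[rotated 2]) (use ap in auto)
    also have "\<dots> = \<bar>h\<bar> powr \<alpha> * (C powr \<alpha> * ((real k + 1) powr (-\<zeta>)) powr \<alpha>)"
      by (simp add: powr_mult)
    also have "((real k + 1) powr (-\<zeta>)) powr \<alpha> = (real k + 1) powr (- \<beta>)"
      using ap by (simp add: powr_powr \<zeta>_def)
    finally show "\<bar>l2_inner (\<lambda>x. ?v x - u x) \<phi>\<bar> powr \<alpha> \<le> Bd"
      by (simp add: Bd_def mult.assoc)
  qed
  moreover have "\<bar>\<kappa>1'\<bar> * Bd = (\<bar>\<kappa>1'\<bar> * C powr \<alpha>) * \<bar>h\<bar> powr \<alpha> * (real k + 1) powr (- \<beta>)"
    by (simp only: Bd_def mult_ac)
  ultimately show ?thesis by (simp only: C_def \<zeta>_def)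
qed

lemma partA_imp:
  fixes A :: "(real \<Rightarrow> real) \<Rightarrow> (real \<Rightarrow> real)"
  assumes gp: "\<gamma> > 0"
  shows "(\<forall>u. continuous_on {0..1} u \<longrightarrow>
                 A u \<in> Cper \<gamma> \<and> holder_norm \<gamma> (A u) \<le> ereal K)
            \<longrightarrow> (\<forall>u k. continuous_on {0..1} u \<longrightarrow>
                 \<bar>l2_inner (\<lambda>x. (A u x)^2) (ebasis k)\<bar> \<le>
                   (3 * (2 ^ (nat \<lfloor>\<gamma>\<rfloor> + 1) * K^2) * (1 + 2 powr \<gamma>)) / (1 + (real k + 1) powr \<gamma>))"
proof (intro impI allI)
  assume H: "\<forall>u. continuous_on {0..1} u \<longrightarrow> A u \<in> Cper \<gamma> \<and> holder_norm \<gamma> (A u) \<le> ereal K"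
  fix u :: "real \<Rightarrow> real" and k :: nat
  assume cu: "continuous_on {0..1} u"
  show "\<bar>l2_inner (\<lambda>x. (A u x)^2) (ebasis k)\<bar> \<le>
                   (3 * (2 ^ (nat \<lfloor>\<gamma>\<rfloor> + 1) * K^2) * (1 + 2 powr \<gamma>)) / (1 + (real k + 1) powr \<gamma>)"
    by (rule partA[OF gp H cu])
qed

lemma partB_imp:
  fixes A :: "(real \<Rightarrow> real) \<Rightarrow> (real \<Rightarrow> real)"
  assumes ap: "\<alpha> > 0" and bp: "\<beta> > 0"
  shows "(\<forall>u v. continuous_on {0..1} u \<longrightarrow> continuous_on {0..1} v \<longrightarrow>
                 l2_norm (\<lambda>x. A u x - A v x) \<le>
                   \<kappa>1' * Sup {\<bar>l2_inner (\<lambda>x. u x - v x) \<phi>\<bar> powr \<alpha> | \<phi>.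
                              \<phi> \<in> Cper (\<beta> / \<alpha>) \<and> holder_norm (\<beta> / \<alpha>) \<phi> \<le> 1})
            \<longrightarrow> ((\<forall>un u. (\<forall>n. continuous_on {0..1} (un n)) \<and> continuous_on {0..1} u \<and>
                          uniform_limit {0..1} un u sequentially \<longrightarrow>
                          (\<lambda>n. l2_norm (\<lambda>x. A (un n) x - A u x)) \<longlonglongrightarrow> 0)
               \<and> (\<forall>u k h. continuous_on {0..1} u \<longrightarrow>
                    l2_norm (\<lambda>x. A (\<lambda>y. u y + h * ebasis k y) x - A u x)
                      \<le> (\<bar>\<kappa>1'\<bar> * (3 * 2 powr (\<beta> / \<alpha>)) powr \<alpha>) * \<bar>h\<bar> powr \<alpha> * (real k + 1) powr (- \<beta>)))"
proof (intro impI conjI allI)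
  assume H: "\<forall>u v. continuous_on {0..1} u \<longrightarrow> continuous_on {0..1} v \<longrightarrow>
                 l2_norm (\<lambda>x. A u x - A v x) \<le>
                   \<kappa>1' * Sup {\<bar>l2_inner (\<lambda>x. u x - v x) \<phi>\<bar> powr \<alpha> | \<phi>.
                              \<phi> \<in> Cper (\<beta> / \<alpha>) \<and> holder_norm (\<beta> / \<alpha>) \<phi> \<le> 1}"
  {
    fix un :: "nat \<Rightarrow> real \<Rightarrow> real" and u :: "real \<Rightarrow> real"
    assume a: "(\<forall>n. continuous_on {0..1} (un n)) \<and> continuous_on {0..1} u \<and>
                          uniform_limit {0..1} un u sequentially"
    show "(\<lambda>n. l2_norm (\<lambda>x. A (un n) x - A u x)) \<longlonglongrightarrow> 0"
      by (rule partB_cont[OF ap H a])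
  }
  {
    fix u :: "real \<Rightarrow> real" and k :: nat and h :: real
    assume cu: "continuous_on {0..1} u"
    show "l2_norm (\<lambda>x. A (\<lambda>y. u y + h * ebasis k y) x - A u x)
                      \<le> (\<bar>\<kappa>1'\<bar> * (3 * 2 powr (\<beta> / \<alpha>)) powr \<alpha>) * \<bar>h\<bar> powr \<alpha> * (real k + 1) powr (- \<beta>)"
      by (rule partB_lip[OF ap bp H cu])
  }
qed

theorem proposition9p3:
  shows "(\<forall>\<gamma>>0. \<forall>\<kappa>3'::real. \<exists>\<kappa>3::real. \<forall>A :: (real \<Rightarrow> real) \<Rightarrow> (real \<Rightarrow> real).
            (\<forall>u. continuous_on {0..1} u \<longrightarrow>
                 A u \<in> Cper \<gamma> \<and> holder_norm \<gamma> (A u) \<le> ereal \<kappa>3')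
            \<longrightarrow> (\<forall>u k. continuous_on {0..1} u \<longrightarrow>
                 \<bar>l2_inner (\<lambda>x. (A u x)^2) (ebasis k)\<bar> \<le> \<kappa>3 / (1 + (real k + 1) powr \<gamma>)))
       \<and> (\<forall>\<alpha>>0. \<forall>\<beta>>0. \<forall>\<kappa>1'::real. \<exists>\<kappa>1::real. \<forall>A :: (real \<Rightarrow> real) \<Rightarrow> (real \<Rightarrow> real).
            (\<forall>u v. continuous_on {0..1} u \<longrightarrow> continuous_on {0..1} v \<longrightarrow>
                 l2_norm (\<lambda>x. A u x - A v x) \<le>
                   \<kappa>1' * Sup {\<bar>l2_inner (\<lambda>x. u x - v x) \<phi>\<bar> powr \<alpha> | \<phi>.
                              \<phi> \<in> Cper (\<beta> / \<alpha>) \<and> holder_norm (\<beta> / \<alpha>) \<phi> \<le> 1})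
            \<longrightarrow> ((\<forall>un u. (\<forall>n. continuous_on {0..1} (un n)) \<and> continuous_on {0..1} u \<and>
                          uniform_limit {0..1} un u sequentially \<longrightarrow>
                          (\<lambda>n. l2_norm (\<lambda>x. A (un n) x - A u x)) \<longlonglongrightarrow> 0)
               \<and> (\<forall>u k h. continuous_on {0..1} u \<longrightarrow>
                    l2_norm (\<lambda>x. A (\<lambda>y. u y + h * ebasis k y) x - A u x)
                      \<le> \<kappa>1 * \<bar>h\<bar> powr \<alpha> * (real k + 1) powr (- \<beta>))))"
proof (intro conjI)
  show "\<forall>\<gamma>>0. \<forall>\<kappa>3'::real. \<exists>\<kappa>3::real. \<forall>A :: (real \<Rightarrow> real) \<Rightarrow> (real \<Rightarrow> real).
            (\<forall>u. continuous_on {0..1} u \<longrightarrow>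
                 A u \<in> Cper \<gamma> \<and> holder_norm \<gamma> (A u) \<le> ereal \<kappa>3')
            \<longrightarrow> (\<forall>u k. continuous_on {0..1} u \<longrightarrow>
                 \<bar>l2_inner (\<lambda>x. (A u x)^2) (ebasis k)\<bar> \<le> \<kappa>3 / (1 + (real k + 1) powr \<gamma>))"
  proof (intro allI impI)
    fix \<gamma> \<kappa>3' :: real assume gp: "\<gamma> > 0"
    show "\<exists>\<kappa>3::real. \<forall>A :: (real \<Rightarrow> real) \<Rightarrow> (real \<Rightarrow> real).
            (\<forall>u. continuous_on {0..1} u \<longrightarrow>
                 A u \<in> Cper \<gamma> \<and> holder_norm \<gamma> (A u) \<le> ereal \<kappa>3')
            \<longrightarrow> (\<forall>u k. continuous_on {0..1} u \<longrightarrow>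
                 \<bar>l2_inner (\<lambda>x. (A u x)^2) (ebasis k)\<bar> \<le> \<kappa>3 / (1 + (real k + 1) powr \<gamma>))"
      by (rule exI, rule allI, rule partA_imp[OF gp])
  qed
next
  show "\<forall>\<alpha>>0. \<forall>\<beta>>0. \<forall>\<kappa>1'::real. \<exists>\<kappa>1::real. \<forall>A :: (real \<Rightarrow> real) \<Rightarrow> (real \<Rightarrow> real).
            (\<forall>u v. continuous_on {0..1} u \<longrightarrow> continuous_on {0..1} v \<longrightarrow>
                 l2_norm (\<lambda>x. A u x - A v x) \<le>
                   \<kappa>1' * Sup {\<bar>l2_inner (\<lambda>x. u x - v x) \<phi>\<bar> powr \<alpha> | \<phi>.
                              \<phi> \<in> Cper (\<beta> / \<alpha>) \<and> holder_norm (\<beta> / \<alpha>) \<phi> \<le> 1})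
            \<longrightarrow> ((\<forall>un u. (\<forall>n. continuous_on {0..1} (un n)) \<and> continuous_on {0..1} u \<and>
                          uniform_limit {0..1} un u sequentially \<longrightarrow>
                          (\<lambda>n. l2_norm (\<lambda>x. A (un n) x - A u x)) \<longlonglongrightarrow> 0)
               \<and> (\<forall>u k h. continuous_on {0..1} u \<longrightarrow>
                    l2_norm (\<lambda>x. A (\<lambda>y. u y + h * ebasis k y) x - A u x)
                      \<le> \<kappa>1 * \<bar>h\<bar> powr \<alpha> * (real k + 1) powr (- \<beta>)))"
  proof (intro allI impI)
    fix \<alpha> \<beta> \<kappa>1' :: real assume ap: "\<alpha> > 0" and bp: "\<beta> > 0"
    show "\<exists>\<kappa>1::real. \<forall>A :: (real \<Rightarrow> real) \<Rightarrow> (real \<Rightarrow> real).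
            (\<forall>u v. continuous_on {0..1} u \<longrightarrow> continuous_on {0..1} v \<longrightarrow>
                 l2_norm (\<lambda>x. A u x - A v x) \<le>
                   \<kappa>1' * Sup {\<bar>l2_inner (\<lambda>x. u x - v x) \<phi>\<bar> powr \<alpha> | \<phi>.
                              \<phi> \<in> Cper (\<beta> / \<alpha>) \<and> holder_norm (\<beta> / \<alpha>) \<phi> \<le> 1})
            \<longrightarrow> ((\<forall>un u. (\<forall>n. continuous_on {0..1} (un n)) \<and> continuous_on {0..1} u \<and>
                          uniform_limit {0..1} un u sequentially \<longrightarrow>
                          (\<lambda>n. l2_norm (\<lambda>x. A (un n) x - A u x)) \<longlonglongrightarrow> 0)
               \<and> (\<forall>u k h. continuous_on {0..1} u \<longrightarrow>
                    l2_norm (\<lambda>x. A (\<lambda>y. u y + h * ebasis k y) x - A u x)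
                      \<le> \<kappa>1 * \<bar>h\<bar> powr \<alpha> * (real k + 1) powr (- \<beta>)))"
      by (rule exI, rule allI, rule partB_imp[OF ap bp])
  qed
qed


end
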